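(* Let $I$ be a strongly stable ideal of $R=K[x_1,\ldots,x_n]$. Then the following are equivalent: (1) $R/I$ has the weak Lefschetz property; (2) (a) the Hilbert function of $R/I$ is unimodal, $h_0<h_1<\cdots<h_k\ge h_{k+1}\ge\cdots\ge h_s$, (b) $(x_1,\ldots,x_{n-1})^{k+1}\subseteq I$, and (c) every minimal monomial generator $M$ of $I$ that is divisible by $x_n$ has $\deg M\ge k+1$.
   Context: $K$ is an infinite field of characteristic $0$. A monomial ideal $I$ is strongly stable if for every monomial $M\in I$ and every variable $x_k$ dividing $M$, $(x_i/x_k)M\in I$ for all $i<k$. A standard graded algebra $A$ (Artinian in the paper) has the weak Lefschetz property if there is $\ell\in A_1$ such that multiplication $\times\ell:A_d\to A_{d+1}$ has maximal rank (is injective or surjective) for all $d\ge1$. $h_d=\dim_K(R/I)_d$; in (a) $k$ is the index at which the Hilbert function stops strictly increasing. *)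

theory Defs
  imports Main "HOL-Library.Poly_Mapping"
begin

text \<open>Variable x_(i+1) of the paper is index i here,
  so R = K[x_1,...,x_n] consists of the polynomials whose monomials only involve indices < n.\<close>

type_synonym 'a mpoly = "(nat \<Rightarrow>\<^sub>0 nat) \<Rightarrow>\<^sub>0 'a"

definition var_exp :: "nat \<Rightarrow> (nat \<Rightarrow>\<^sub>0 nat)" where
  "var_exp i = Poly_Mapping.single i 1"

definition mon :: "'a::zero \<Rightarrow> (nat \<Rightarrow>\<^sub>0 nat) \<Rightarrow> 'a mpoly" where
  "mon c m = Poly_Mapping.single m c"

definition mdeg :: "(nat \<Rightarrow>\<^sub>0 nat) \<Rightarrow> nat" where
  "mdeg m = (\<Sum>i\<in>Poly_Mapping.keys m. Poly_Mapping.lookup m i)"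

definition polyR :: "nat \<Rightarrow> ('a::field) mpoly set" where
  "polyR n = {f. \<forall>m\<in>Poly_Mapping.keys f. Poly_Mapping.keys m \<subseteq> {..<n}}"

definition homog :: "nat \<Rightarrow> nat \<Rightarrow> ('a::field) mpoly set" where
  "homog n d = {f \<in> polyR n. \<forall>m\<in>Poly_Mapping.keys f. mdeg m = d}"

definition is_ideal :: "nat \<Rightarrow> ('a::field) mpoly set \<Rightarrow> bool" where
  "is_ideal n I \<longleftrightarrow> I \<subseteq> polyR n \<and> 0 \<in> I \<and> (\<forall>f\<in>I. \<forall>g\<in>I. f + g \<in> I)
     \<and> (\<forall>r\<in>polyR n. \<forall>f\<in>I. r * f \<in> I)"

definition ideal_gen :: "nat \<Rightarrow> ('a::field) mpoly set \<Rightarrow> 'a mpoly set" where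
  "ideal_gen n S = \<Inter>{J. is_ideal n J \<and> S \<subseteq> J}"

fun ideal_pow :: "nat \<Rightarrow> ('a::field) mpoly set \<Rightarrow> nat \<Rightarrow> 'a mpoly set" where
  "ideal_pow n J 0 = polyR n"
| "ideal_pow n J (Suc k) = ideal_gen n {f * g | f g. f \<in> J \<and> g \<in> ideal_pow n J k}"

text \<open>Monomial ideal: an ideal containing every monomial occurring in any of its elements
  (equivalently, generated by monomials).\<close>
definition monomial_ideal :: "nat \<Rightarrow> ('a::field) mpoly set \<Rightarrow> bool" where
  "monomial_ideal n I \<longleftrightarrow> is_ideal n I \<and> (\<forall>f\<in>I. \<forall>m\<in>Poly_Mapping.keys f. mon 1 m \<in> I)"

definition strongly_stable :: "nat \<Rightarrow> ('a::field) mpoly set \<Rightarrow> bool" where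
  "strongly_stable n I \<longleftrightarrow> monomial_ideal n I \<and>
     (\<forall>m. mon 1 m \<in> I \<longrightarrow> (\<forall>k. 0 < Poly_Mapping.lookup m k \<longrightarrow>
        (\<forall>i<k. mon 1 (var_exp i + (m - var_exp k)) \<in> I)))"

definition indep_mod :: "('a::field) mpoly set \<Rightarrow> 'a mpoly set \<Rightarrow> bool" where
  "indep_mod I S \<longleftrightarrow> (\<forall>c. (\<Sum>f\<in>S. mon (c f) 0 * f) \<in> I \<longrightarrow> (\<forall>f\<in>S. c f = 0))"

text \<open>Hilbert function: h_d = dim_K (R/I)_d = dim_K (R_d / I_d).\<close>
definition hilb :: "nat \<Rightarrow> ('a::field) mpoly set \<Rightarrow> nat \<Rightarrow> nat" where
  "hilb n I d = (GREATEST k. \<exists>S. finite S \<and> S \<subseteq> homog n d \<and> card S = k \<and> indep_mod I S)"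

definition artinian_quot :: "nat \<Rightarrow> ('a::field) mpoly set \<Rightarrow> bool" where
  "artinian_quot n I \<longleftrightarrow> (\<exists>D. \<forall>d\<ge>D. homog n d \<subseteq> I)"

text \<open>Weak Lefschetz property of R/I: some linear form l gives multiplication maps
  (R/I)_d \<rightarrow> (R/I)_(d+1) of maximal rank (injective or surjective) for all d \<ge> 1.\<close>
definition WLP :: "nat \<Rightarrow> ('a::field) mpoly set \<Rightarrow> bool" where
  "WLP n I \<longleftrightarrow> (\<exists>l\<in>homog n 1. \<forall>d\<ge>1.
      (\<forall>f\<in>homog n d. l * f \<in> I \<longrightarrow> f \<in> I) \<or>
      (\<forall>g\<in>homog n (d+1). \<exists>f\<in>homog n d. g - l * f \<in> I))"

definition min_mon_gen :: "nat \<Rightarrow> ('a::field) mpoly set \<Rightarrow> (nat \<Rightarrow>\<^sub>0 nat) \<Rightarrow> bool" where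
  "min_mon_gen n I m \<longleftrightarrow> mon 1 m \<in> I \<and>
     (\<forall>m'. mon 1 m' \<in> I \<and> (\<forall>i. Poly_Mapping.lookup m' i \<le> Poly_Mapping.lookup m i) \<longrightarrow> m' = m)"

end

theory Submission
  imports Defs "HOL.Vector_Spaces"
begin

lemma mon_mult: "mon a m * mon b m' = mon (a*b) (m+m')"
  by (simp add: mon_def mult_single)

lemma lookup_mon: "Poly_Mapping.lookup (mon c m) k = (if k = m then c else 0)"
  by (simp add: mon_def lookup_single when_def)

lemma keys_mon_sub: "Poly_Mapping.keys (mon c m) \<subseteq> {m}"
  by (simp add: mon_def)

lemma lookup_sum_mon:
  assumes "finite A" "inj_on h A"
  shows "Poly_Mapping.lookup (\<Sum>a\<in>A. mon (g a) (h a)) k = (if k \<in> h ` A then g (the_inv_into A h k) else 0)"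
  using assms
proof (induction A rule: finite_induct)
  case empty then show ?case by simp
next
  case (insert x F)
  have injF: "inj_on h F" using insert.prems by (auto intro: inj_on_subset)
  have hx: "h x \<notin> h ` F" using insert by (auto simp: inj_on_def)
  show ?case
  proof (cases "k = h x")
    case True
    then have "k \<notin> h ` F" using hx by simp
    moreover have "the_inv_into (insert x F) h k = x" using True insert.prems
      by (simp add: the_inv_into_f_f)
    ultimately show ?thesis using insert injF True by (simp add: lookup_add lookup_mon)
  next
    case False
    have "k \<in> h ` F \<Longrightarrow> the_inv_into (insert x F) h k = the_inv_into F h k"
    proof -
      assume "k \<in> h ` F"
      then obtain y where y: "y \<in> F" "k = h y" by auto
      then show ?thesis using insert.prems injF by (simp add: the_inv_into_f_f)
    qed
    then show ?thesis using insert injF False by (auto simp: lookup_add lookup_mon)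
  qed
qed

lemma lookup_sum_mon_id:
  assumes "finite A"
  shows "Poly_Mapping.lookup (\<Sum>a\<in>A. mon (g a) a) k = (if k \<in> A then g k else 0)"
proof -
  have "k \<in> A \<Longrightarrow> the_inv_into A id k = k"
    using the_inv_into_f_f[of id A k] by simp
  then show ?thesis using lookup_sum_mon[OF assms, of id g k] by auto
qed

lemma poly_expand: "f = (\<Sum>m\<in>Poly_Mapping.keys f. mon (Poly_Mapping.lookup f m) m)"
  by (rule poly_mapping_eqI) (simp add: lookup_sum_mon_id in_keys_iff)

lemma mon_scale: "mon (c::'a::field) m = mon c 0 * mon 1 m"
  by (simp add: mon_mult)

lemma lookup_scale: "Poly_Mapping.lookup (mon (c::'a::field) 0 * f) k = c * Poly_Mapping.lookup f k"
proof -
  have "mon c 0 * f = (\<Sum>m\<in>Poly_Mapping.keys f. mon (c * Poly_Mapping.lookup f m) m)"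
    by (subst poly_expand[of f]) (simp add: sum_distrib_left mon_mult)
  then show ?thesis by (simp add: lookup_sum_mon_id in_keys_iff)
qed

lemma lookup_shift: "Poly_Mapping.lookup (mon (1::'a::field) a * f) (a + k) = Poly_Mapping.lookup f k"
proof -
  have "mon 1 a * f = (\<Sum>m\<in>Poly_Mapping.keys f. mon (Poly_Mapping.lookup f m) (a + m))"
    by (subst poly_expand[of f]) (simp add: sum_distrib_left mon_mult)
  also have "Poly_Mapping.lookup \<dots> (a + k) = Poly_Mapping.lookup f k"
    by (subst lookup_sum_mon) (auto simp: inj_on_def in_keys_iff the_inv_into_f_f)
  finally show ?thesis .
qed

lemma mon_zero_one: "mon (1::'a::field) 0 = 1"
  by (simp add: mon_def)

lemma mon_eq_iff: "mon (1::'a::field) a = mon 1 b \<longleftrightarrow> a = b"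
  by (metis lookup_mon one_neq_zero)

lemma mdeg_alt: "finite S \<Longrightarrow> Poly_Mapping.keys m \<subseteq> S \<Longrightarrow> mdeg m = (\<Sum>i\<in>S. Poly_Mapping.lookup m i)"
  unfolding mdeg_def by (rule sum.mono_neutral_left) (auto simp: in_keys_iff)

lemma mdeg_add: "mdeg (a + b) = mdeg a + mdeg b"
proof -
  let ?S = "Poly_Mapping.keys a \<union> Poly_Mapping.keys b"
  have "Poly_Mapping.keys (a+b) \<subseteq> ?S" by (rule keys_add)
  then show ?thesis
    by (simp add: mdeg_alt[of ?S] lookup_add sum.distrib)
qed

lemma mdeg_var: "mdeg (var_exp i) = 1"
  by (simp add: mdeg_def var_exp_def)

lemma mdeg_zero: "mdeg 0 = 0" by (simp add: mdeg_def)

lemma mdeg_eq_0: "mdeg m = 0 \<longleftrightarrow> m = 0"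
proof
  assume "mdeg m = 0"
  then have "\<forall>i\<in>Poly_Mapping.keys m. Poly_Mapping.lookup m i = 0" by (simp add: mdeg_def)
  then show "m = 0" by (metis in_keys_iff keys_eq_empty equals0I)
qed (simp add: mdeg_zero)

lemma le_decomp:
  assumes "\<forall>i. Poly_Mapping.lookup a i \<le> Poly_Mapping.lookup (b::nat\<Rightarrow>\<^sub>0nat) i"
  shows "b = a + (b - a)"
  by (rule poly_mapping_eqI) (use assms in \<open>simp add: lookup_add lookup_minus\<close>)

lemma keys_add_nat: "Poly_Mapping.keys ((a::nat\<Rightarrow>\<^sub>0nat) + b) = Poly_Mapping.keys a \<union> Poly_Mapping.keys b"
  by (auto simp: in_keys_iff lookup_add)

lemma mdeg_pos: "0 < mdeg m \<Longrightarrow> \<exists>i. 0 < Poly_Mapping.lookup m i"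
  by (metis mdeg_eq_0 gr0I keys_eq_empty in_keys_iff equals0I)

lemma mdeg_one: "mdeg m = 1 \<Longrightarrow> \<exists>i. m = var_exp i"
proof -
  assume a: "mdeg m = 1"
  then obtain i where i: "0 < Poly_Mapping.lookup m i" using mdeg_pos by fastforce
  have le: "\<forall>j. Poly_Mapping.lookup (var_exp i) j \<le> Poly_Mapping.lookup m j"
    using i by (auto simp: var_exp_def lookup_single when_def)
  have "m = var_exp i + (m - var_exp i)" using le_decomp[OF le] .
  then have "mdeg (m - var_exp i) = 0" using a mdeg_add[of "var_exp i" "m - var_exp i"] mdeg_var by simp
  then have "m - var_exp i = 0" by (simp add: mdeg_eq_0)
  then show ?thesis using \<open>m = var_exp i + (m - var_exp i)\<close> by auto
qed


lemma polyR_iff: "f \<in> polyR n \<longleftrightarrow> (\<forall>m\<in>Poly_Mapping.keys f. Poly_Mapping.keys m \<subseteq> {..<n})"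
  by (simp add: polyR_def)

lemma mon_polyR: "Poly_Mapping.keys m \<subseteq> {..<n} \<Longrightarrow> mon c m \<in> polyR n"
  using keys_mon_sub[of c m] by (auto simp: polyR_def)

lemma polyR_add: "f \<in> polyR n \<Longrightarrow> g \<in> polyR n \<Longrightarrow> f + g \<in> polyR n"
  using keys_add[of f g] by (auto simp: polyR_def)

lemma polyR_uminus: "f \<in> polyR n \<Longrightarrow> - f \<in> polyR n"
  by (auto simp: polyR_def)

lemma polyR_diff: "f \<in> polyR n \<Longrightarrow> g \<in> polyR n \<Longrightarrow> f - g \<in> polyR n"
  using polyR_add[of f n "-g"] polyR_uminus[of g n] by simp

lemma polyR_mult: "f \<in> polyR n \<Longrightarrow> g \<in> polyR n \<Longrightarrow> f * g \<in> polyR n"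
proof -
  assume a: "f \<in> polyR n" "g \<in> polyR n"
  show ?thesis unfolding polyR_def mem_Collect_eq
  proof
    fix m assume "m \<in> Poly_Mapping.keys (f * g)"
    then obtain x y where "m = x + y" "x \<in> Poly_Mapping.keys f" "y \<in> Poly_Mapping.keys g"
      using keys_mult[of f g] by blast
    then show "Poly_Mapping.keys m \<subseteq> {..<n}" using a by (auto simp: polyR_def keys_add_nat)
  qed
qed

lemma polyR_zero: "0 \<in> polyR n" by (simp add: polyR_def)

lemma polyR_sum: "(\<And>a. a \<in> A \<Longrightarrow> g a \<in> polyR n) \<Longrightarrow> sum g A \<in> polyR n"
  by (induction A rule: infinite_finite_induct) (auto simp: polyR_zero polyR_add)

lemma homog_iff: "f \<in> homog n d \<longleftrightarrow> f \<in> polyR n \<and> (\<forall>m\<in>Poly_Mapping.keys f. mdeg m = d)"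
  by (simp add: homog_def)

context
  fixes n :: nat and I :: "('a::field) mpoly set"
  assumes idl: "is_ideal n I"
begin

lemma I_polyR: "f \<in> I \<Longrightarrow> f \<in> polyR n" using idl by (auto simp: is_ideal_def)
lemma I_zero: "0 \<in> I" using idl by (auto simp: is_ideal_def)
lemma I_add: "f \<in> I \<Longrightarrow> g \<in> I \<Longrightarrow> f + g \<in> I" using idl by (auto simp: is_ideal_def)
lemma I_mult: "r \<in> polyR n \<Longrightarrow> f \<in> I \<Longrightarrow> r * f \<in> I" using idl by (auto simp: is_ideal_def)
lemma I_mult2: "r \<in> polyR n \<Longrightarrow> f \<in> I \<Longrightarrow> f * r \<in> I" using I_mult by (metis mult.commute)
lemma I_scale: "f \<in> I \<Longrightarrow> mon c 0 * f \<in> I"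
  by (rule I_mult) (auto intro: mon_polyR)
lemma I_uminus: "f \<in> I \<Longrightarrow> - f \<in> I"
proof -
  assume "f \<in> I"
  then have "mon (-1) 0 * f \<in> I" by (rule I_scale)
  moreover have "mon (-1::'a) 0 = - 1" by (simp add: mon_def single_uminus)
  ultimately show ?thesis by simp
qed
lemma I_diff: "f \<in> I \<Longrightarrow> g \<in> I \<Longrightarrow> f - g \<in> I"
  using I_add[of f "-g"] I_uminus[of g] by simp
lemma I_sum: "(\<And>a. a \<in> A \<Longrightarrow> g a \<in> I) \<Longrightarrow> sum g A \<in> I"
  by (induction A rule: infinite_finite_induct) (auto simp: I_zero I_add)

lemma keys_in_I:
  assumes "f \<in> polyR n" "\<forall>m\<in>Poly_Mapping.keys f. mon 1 m \<in> I"
  shows "f \<in> I"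
proof -
  have "(\<Sum>m\<in>Poly_Mapping.keys f. mon (Poly_Mapping.lookup f m) m) \<in> I"
  proof (rule I_sum)
    fix m assume "m \<in> Poly_Mapping.keys f"
    then have "mon 1 m \<in> I" using assms by auto
    then have "mon (Poly_Mapping.lookup f m) 0 * mon 1 m \<in> I" by (rule I_scale)
    then show "mon (Poly_Mapping.lookup f m) m \<in> I" by (simp add: mon_mult)
  qed
  then show ?thesis by (simp flip: poly_expand)
qed

lemma mon_mult_I:
  assumes "mon 1 a \<in> I" "Poly_Mapping.keys b \<subseteq> {..<n}"
  shows "mon 1 (a + b) \<in> I"
proof -
  have "mon 1 b * mon 1 a \<in> I" by (rule I_mult) (use assms in \<open>auto intro: mon_polyR\<close>)
  then show ?thesis by (simp add: mon_mult add.commute)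
qed

lemma keys_mon_I: "mon (1::'a) m \<in> I \<Longrightarrow> Poly_Mapping.keys m \<subseteq> {..<n}"
  using I_polyR[of "mon 1 m"] by (auto simp: polyR_def mon_def)

end


lemma polyR_ideal: "is_ideal n (polyR n :: ('a::field) mpoly set)"
  by (auto simp: is_ideal_def polyR_zero polyR_add polyR_mult)

lemma ig_least: "is_ideal n J \<Longrightarrow> S \<subseteq> J \<Longrightarrow> ideal_gen n S \<subseteq> J"
  by (auto simp: ideal_gen_def)

lemma ig_sup: "S \<subseteq> ideal_gen n S"
  by (auto simp: ideal_gen_def)

lemma ig_ideal:
  assumes "S \<subseteq> polyR n"
  shows "is_ideal n (ideal_gen n (S :: ('a::field) mpoly set))"
proof -
  have sub: "ideal_gen n S \<subseteq> polyR n" by (rule ig_least[OF polyR_ideal assms])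
  show ?thesis unfolding is_ideal_def
  proof (intro conjI ballI)
    show "ideal_gen n S \<subseteq> polyR n" by (rule sub)
    show "0 \<in> ideal_gen n S" by (auto simp: ideal_gen_def is_ideal_def)
    show "f + g \<in> ideal_gen n S" if "f \<in> ideal_gen n S" "g \<in> ideal_gen n S" for f g
      using that by (auto simp: ideal_gen_def is_ideal_def)
    show "r * f \<in> ideal_gen n S" if "r \<in> polyR n" "f \<in> ideal_gen n S" for r f
      using that by (auto simp: ideal_gen_def is_ideal_def)
  qed
qed

lemma keys_var: "Poly_Mapping.keys (var_exp i) = {i}"
  by (simp add: var_exp_def)

fun Wm :: "nat \<Rightarrow> nat \<Rightarrow> (nat \<Rightarrow>\<^sub>0 nat) set" where
  "Wm n 0 = {0}"
| "Wm n (Suc j) = {var_exp i + w | i w. i < n - 1 \<and> w \<in> Wm n j}"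

lemma W_props: "w \<in> Wm n j \<Longrightarrow> mdeg w = j \<and> Poly_Mapping.keys w \<subseteq> {..<n-1}"
proof (induction j arbitrary: w)
  case 0 then show ?case by (auto simp: mdeg_zero)
next
  case (Suc j)
  then obtain i w' where w: "w = var_exp i + w'" "i < n - 1" "w' \<in> Wm n j" by auto
  then show ?case using Suc.IH[OF w(3)] by (auto simp: mdeg_add mdeg_var keys_add_nat keys_var)
qed

lemma W_exists:
  "Poly_Mapping.keys m \<subseteq> {..<n-1} \<Longrightarrow> j \<le> mdeg m \<Longrightarrow> \<exists>w\<in>Wm n j. \<exists>r. m = w + r"
proof (induction j arbitrary: m)
  case 0 then show ?case by auto
next
  case (Suc j)
  then obtain i where i: "0 < Poly_Mapping.lookup m i" using mdeg_pos[of m] by auto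
  then have "i \<in> Poly_Mapping.keys m" by (simp add: in_keys_iff)
  then have il: "i < n - 1" using Suc.prems by auto
  have le: "\<forall>k. Poly_Mapping.lookup (var_exp i) k \<le> Poly_Mapping.lookup m k"
    using i by (auto simp: var_exp_def lookup_single when_def)
  define m' where "m' = m - var_exp i"
  have md: "m = var_exp i + m'" unfolding m'_def by (rule le_decomp[OF le])
  have "mdeg m' \<ge> j" using Suc.prems md mdeg_add[of "var_exp i" m'] mdeg_var by simp
  moreover have "Poly_Mapping.keys m' \<subseteq> {..<n-1}" using Suc.prems md by (auto simp: keys_add_nat)
  ultimately obtain w r where "w \<in> Wm n j" "m' = w + r" using Suc.IH by blast
  then show ?case using md il by (intro bexI[of _ "var_exp i + w"] exI[of _ r]) (auto simp: add.assoc)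
qed

abbreviation Gv :: "nat \<Rightarrow> ('a::field) mpoly set" where
  "Gv n \<equiv> ideal_gen n {mon 1 (var_exp i) | i. i < n - 1}"

lemma Gv_sub: "{mon (1::'a::field) (var_exp i) | i. i < n - 1} \<subseteq> polyR n"
  by (auto intro!: mon_polyR simp: keys_var)

lemma pow_polyR: "J \<subseteq> polyR n \<Longrightarrow> ideal_pow n (J :: ('a::field) mpoly set) j \<subseteq> polyR n"
proof (induction j)
  case 0 then show ?case by simp
next
  case (Suc j)
  show ?case unfolding ideal_pow.simps
  proof (rule ig_least[OF polyR_ideal], rule subsetI)
    fix h assume "h \<in> {f * g |f g. f \<in> J \<and> g \<in> ideal_pow n J j}"
    then obtain f g where "h = f * g" "f \<in> J" "g \<in> ideal_pow n J j" by blast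
    then show "h \<in> polyR n" using Suc by (metis polyR_mult subsetD)
  qed
qed

lemma W_in_pow: "w \<in> Wm n j \<Longrightarrow> mon (1::'a::field) w \<in> ideal_pow n (Gv n) j"
proof (induction j arbitrary: w)
  case 0 then show ?case by (simp add: mon_polyR)
next
  case (Suc j)
  then obtain i w' where w: "w = var_exp i + w'" "i < n - 1" "w' \<in> Wm n j" by auto
  have "mon (1::'a) (var_exp i) \<in> {mon (1::'a) (var_exp i) | i. i < n - 1}" using w(2) by blast
  then have a: "mon (1::'a) (var_exp i) \<in> Gv n" by (rule subsetD[OF ig_sup])
  have b: "mon (1::'a) w' \<in> ideal_pow n (Gv n) j" using Suc.IH w(3) by blast
  have "mon (1::'a) (var_exp i) * mon 1 w' \<in> {f * g |f g. f \<in> Gv n \<and> g \<in> ideal_pow n (Gv n) j}"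
    using a b by blast
  then have "mon (1::'a) (var_exp i) * mon 1 w' \<in> ideal_gen n {f * g |f g. f \<in> Gv n \<and> g \<in> ideal_pow n (Gv n) j}"
    by (rule subsetD[OF ig_sup])
  then show ?case using w by (simp add: mon_mult)
qed

definition Pdiv :: "nat \<Rightarrow> nat \<Rightarrow> ('a::field) mpoly set" where
  "Pdiv n j = {f \<in> polyR n. \<forall>m\<in>Poly_Mapping.keys f. \<exists>w\<in>Wm n j. \<exists>r. m = w + r}"

lemma Pdiv_ideal: "is_ideal n (Pdiv n j)"
  unfolding is_ideal_def
proof (intro conjI ballI)
  show "Pdiv n j \<subseteq> polyR n" by (auto simp: Pdiv_def)
  show "0 \<in> Pdiv n j" by (simp add: Pdiv_def polyR_zero)
  show "f + g \<in> Pdiv n j" if "f \<in> Pdiv n j" "g \<in> Pdiv n j" for f g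
    using that keys_add[of f g] by (auto simp: Pdiv_def polyR_add)
  show "r * f \<in> Pdiv n j" if "r \<in> polyR n" "f \<in> Pdiv n j" for r f
  proof -
    have "\<exists>w\<in>Wm n j. \<exists>s. m = w + s" if m: "m \<in> Poly_Mapping.keys (r * f)" for m
    proof -
      obtain a b where ab: "m = a + b" "a \<in> Poly_Mapping.keys r" "b \<in> Poly_Mapping.keys f"
        using keys_mult[of r f] m by blast
      then obtain w s where "w \<in> Wm n j" "b = w + s" using \<open>f \<in> Pdiv n j\<close> by (auto simp: Pdiv_def)
      then show ?thesis using ab by (intro bexI[of _ w] exI[of _ "a + s"]) (auto simp: ac_simps)
    qed
    then show ?thesis using that by (auto simp: Pdiv_def intro: polyR_mult)
  qed
qed

lemma Gv_Pdiv: "Gv n \<subseteq> (Pdiv n 1 :: ('a::field) mpoly set)"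
proof (rule ig_least[OF Pdiv_ideal])
  show "{mon (1::'a) (var_exp i) | i. i < n - 1} \<subseteq> Pdiv n 1"
  proof
    fix f assume "f \<in> {mon (1::'a) (var_exp i) | i. i < n - 1}"
    then obtain i where i: "f = mon 1 (var_exp i)" "i < n - 1" by auto
    have "var_exp i + 0 \<in> Wm n 1" using i(2) by auto
    then show "f \<in> Pdiv n 1" using i Gv_sub[of n]
      by (auto simp: Pdiv_def mon_def) 
  qed
qed

lemma pow_Pdiv: "ideal_pow n (Gv n :: ('a::field) mpoly set) j \<subseteq> Pdiv n j"
proof (induction j)
  case 0 then show ?case by (auto simp: Pdiv_def)
next
  case (Suc j)
  show ?case unfolding ideal_pow.simps
  proof (rule ig_least[OF Pdiv_ideal], rule subsetI)
    fix h :: "'a mpoly" assume "h \<in> {f * g |f g. f \<in> Gv n \<and> g \<in> ideal_pow n (Gv n) j}"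
    then obtain f g where h: "h = f * g" "f \<in> Gv n" "g \<in> ideal_pow n (Gv n) j" by auto
    have f1: "f \<in> Pdiv n 1" using h(2) Gv_Pdiv by blast
    have g1: "g \<in> Pdiv n j" by (rule subsetD[OF Suc.IH h(3)])
    have "\<exists>w\<in>Wm n (Suc j). \<exists>s. m = w + s" if m: "m \<in> Poly_Mapping.keys (f * g)" for m
    proof -
      obtain a b where ab: "m = a + b" "a \<in> Poly_Mapping.keys f" "b \<in> Poly_Mapping.keys g"
        using keys_mult[of f g] m by blast
      then obtain w s where ws: "w \<in> Wm n j" "b = w + s" using g1 by (auto simp: Pdiv_def)
      obtain w1 s1 where w1: "w1 \<in> Wm n 1" "a = w1 + s1" using ab(2) f1 unfolding Pdiv_def by blast
      then obtain i where i: "w1 = var_exp i" "i < n - 1" by auto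
      show ?thesis using ab ws w1 i
        by (intro bexI[of _ "var_exp i + w"] exI[of _ "s1 + s"]) (auto simp: ac_simps)
    qed
    moreover have "f * g \<in> polyR n" using f1 g1 by (auto simp: Pdiv_def intro: polyR_mult)
    ultimately show "h \<in> Pdiv n (Suc j)" using h by (auto simp: Pdiv_def)
  qed
qed


lemma le_mdeg:
  assumes "\<forall>i. Poly_Mapping.lookup a i \<le> Poly_Mapping.lookup b i"
  shows "mdeg a \<le> mdeg b" "a \<noteq> b \<Longrightarrow> mdeg a < mdeg b"
proof -
  have b: "b = a + (b - a)" by (rule le_decomp[OF assms])
  then show "mdeg a \<le> mdeg b" by (metis mdeg_add le_add1)
  assume "a \<noteq> b"
  then have "b - a \<noteq> 0" using b by auto
  then have "mdeg (b - a) > 0" using mdeg_eq_0 by auto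
  then show "mdeg a < mdeg b" using b by (metis mdeg_add less_add_same_cancel1)
qed

lemma add_minus_cancel_pm: "((a::nat\<Rightarrow>\<^sub>0nat) + b) - a = b"
  by (rule poly_mapping_eqI) (simp add: lookup_add lookup_minus)

lemma keys_minus_nat: "Poly_Mapping.keys ((a::nat\<Rightarrow>\<^sub>0nat) - b) \<subseteq> Poly_Mapping.keys a"
  by (auto simp: in_keys_iff lookup_minus)

lemma finite_mons: "finite {m::nat\<Rightarrow>\<^sub>0nat. Poly_Mapping.keys m \<subseteq> {..<n} \<and> mdeg m = d}"
proof -
  let ?F = "{f::nat\<Rightarrow>nat. \<forall>x. (x \<in> {..<n} \<longrightarrow> f x \<in> {..d}) \<and> (x \<notin> {..<n} \<longrightarrow> f x = 0)}"
  have fin: "finite ?F" by (rule finite_set_of_finite_funs) auto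
  have "Poly_Mapping.lookup ` {m::nat\<Rightarrow>\<^sub>0nat. Poly_Mapping.keys m \<subseteq> {..<n} \<and> mdeg m = d} \<subseteq> ?F"
  proof clarsimp
    fix m :: "nat\<Rightarrow>\<^sub>0nat" and x assume a: "Poly_Mapping.keys m \<subseteq> {..<n}" "d = mdeg m"
    show "(x < n \<longrightarrow> Poly_Mapping.lookup m x \<le> mdeg m) \<and> (\<not> x < n \<longrightarrow> Poly_Mapping.lookup m x = 0)"
    proof (intro conjI impI)
      assume "x < n"
      show "Poly_Mapping.lookup m x \<le> mdeg m"
      proof (cases "x \<in> Poly_Mapping.keys m")
        case True then show ?thesis unfolding mdeg_def
          by (rule member_le_sum) auto
      qed (simp add: in_keys_iff)
    next
      assume "\<not> x < n" then show "Poly_Mapping.lookup m x = 0" using a by (auto simp: in_keys_iff)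
    qed
  qed
  then have "finite (Poly_Mapping.lookup ` {m::nat\<Rightarrow>\<^sub>0nat. Poly_Mapping.keys m \<subseteq> {..<n} \<and> mdeg m = d})"
    using fin finite_subset by blast
  then show ?thesis by (rule finite_imageD) (simp add: inj_on_def)
qed

definition std :: "nat \<Rightarrow> ('a::field) mpoly set \<Rightarrow> nat \<Rightarrow> (nat\<Rightarrow>\<^sub>0nat) set" where
  "std n I d = {m. Poly_Mapping.keys m \<subseteq> {..<n} \<and> mdeg m = d \<and> mon 1 m \<notin> I}"

lemma std_fin: "finite (std n I d)"
  by (rule finite_subset[OF _ finite_mons[of n d]]) (auto simp: std_def)

definition InjP :: "nat \<Rightarrow> ('a::field) mpoly set \<Rightarrow> nat \<Rightarrow> bool" where
  "InjP n I d \<longleftrightarrow> (\<forall>u\<in>std n I d. mon 1 (var_exp (n-1) + u) \<notin> I)"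

definition SurjP :: "nat \<Rightarrow> ('a::field) mpoly set \<Rightarrow> nat \<Rightarrow> bool" where
  "SurjP n I d \<longleftrightarrow> (\<forall>w\<in>std n I (Suc d). 0 < Poly_Mapping.lookup w (n-1))"

context
  fixes n :: nat and I :: "('a::field) mpoly set"
  assumes n1: "1 \<le> n" and ss: "strongly_stable n I"
begin

lemma mI: "monomial_ideal n I" using ss by (simp add: strongly_stable_def)
lemma idl: "is_ideal n I" using mI by (simp add: monomial_ideal_def)
lemma mon_key: "f \<in> I \<Longrightarrow> m \<in> Poly_Mapping.keys f \<Longrightarrow> mon 1 m \<in> I"
  using mI by (auto simp: monomial_ideal_def)

lemma ss_move: "mon 1 m \<in> I \<Longrightarrow> 0 < Poly_Mapping.lookup m k \<Longrightarrow> i < k \<Longrightarrow> mon 1 (var_exp i + (m - var_exp k)) \<in> I"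
  using ss by (auto simp: strongly_stable_def)

lemma e_keys: "Poly_Mapping.keys (var_exp (n-1)) \<subseteq> {..<n}"
  using n1 by (simp add: keys_var)

lemma e_decomp: "0 < Poly_Mapping.lookup w k \<Longrightarrow> w = var_exp k + (w - var_exp k)"
  by (rule le_decomp) (auto simp: var_exp_def lookup_single when_def)

lemma lookup_e: "Poly_Mapping.lookup (var_exp k + u) k > 0"
  by (simp add: lookup_add var_exp_def)

lemma inj_le: "InjP n I d \<Longrightarrow> card (std n I d) \<le> card (std n I (Suc d))"
proof -
  assume a: "InjP n I d"
  have "inj_on ((+) (var_exp (n-1))) (std n I d)" by (auto simp: inj_on_def)
  moreover have "(+) (var_exp (n-1)) ` std n I d \<subseteq> std n I (Suc d)"
    using a e_keys by (auto simp: std_def InjP_def keys_add_nat mdeg_add mdeg_var)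
  ultimately show ?thesis by (rule card_inj_on_le[OF _ _ std_fin])
qed

lemma inj_lt: "InjP n I d \<Longrightarrow> \<not> SurjP n I d \<Longrightarrow> card (std n I d) < card (std n I (Suc d))"
proof -
  assume a: "InjP n I d" "\<not> SurjP n I d"
  then obtain w where w: "w \<in> std n I (Suc d)" "Poly_Mapping.lookup w (n-1) = 0"
    by (auto simp: SurjP_def)
  have inj: "inj_on ((+) (var_exp (n-1))) (std n I d)" by (auto simp: inj_on_def)
  have sub: "(+) (var_exp (n-1)) ` std n I d \<subseteq> std n I (Suc d)"
    using a e_keys by (auto simp: std_def InjP_def keys_add_nat mdeg_add mdeg_var)
  have "w \<notin> (+) (var_exp (n-1)) ` std n I d"
  proof
    assume "w \<in> (+) (var_exp (n-1)) ` std n I d"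
    then obtain x where "w = var_exp (n-1) + x" by blast
    then show False using w(2) lookup_e[of "n-1" x] by simp
  qed
  then have "(+) (var_exp (n-1)) ` std n I d \<subset> std n I (Suc d)" using sub w(1) by blast
  then have "card ((+) (var_exp (n-1)) ` std n I d) < card (std n I (Suc d))"
    by (rule psubset_card_mono[OF std_fin])
  then show ?thesis using card_image[OF inj] by simp
qed

lemma surj_le: "SurjP n I d \<Longrightarrow> card (std n I (Suc d)) \<le> card (std n I d)"
proof -
  assume a: "SurjP n I d"
  have dec: "w = var_exp (n-1) + (w - var_exp (n-1))" if "w \<in> std n I (Suc d)" for w
    using a that e_decomp by (auto simp: SurjP_def)
  have "inj_on (\<lambda>w. w - var_exp (n-1)) (std n I (Suc d))"
    by (rule inj_onI) (metis dec)
  moreover have "(\<lambda>w. w - var_exp (n-1)) ` std n I (Suc d) \<subseteq> std n I d"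
  proof clarify
    fix w assume w: "w \<in> std n I (Suc d)"
    have "mdeg (w - var_exp (n-1)) = d" using dec[OF w] mdeg_add[of "var_exp (n-1)" "w - var_exp (n-1)"] mdeg_var w
      by (simp add: std_def)
    moreover have "Poly_Mapping.keys (w - var_exp (n-1)) \<subseteq> {..<n}" using w keys_minus_nat by (fastforce simp: std_def)
    moreover have "mon 1 (w - var_exp (n-1)) \<notin> I"
    proof
      assume "mon 1 (w - var_exp (n-1)) \<in> I"
      then have "mon 1 ((w - var_exp (n-1)) + var_exp (n-1)) \<in> I" by (rule mon_mult_I[OF idl _ e_keys])
      then show False using w dec[OF w] by (simp add: std_def add.commute)
    qed
    ultimately show "w - var_exp (n-1) \<in> std n I d" by (simp add: std_def)
  qed
  ultimately show ?thesis by (rule card_inj_on_le[OF _ _ std_fin])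
qed

lemma surj_step: "SurjP n I d \<Longrightarrow> SurjP n I (Suc d)"
proof (unfold SurjP_def, rule ballI, rule ccontr)
  fix w assume a: "\<forall>w\<in>std n I (Suc d). 0 < Poly_Mapping.lookup w (n - 1)" "w \<in> std n I (Suc (Suc d))"
    "\<not> 0 < Poly_Mapping.lookup w (n - 1)"
  then have "0 < mdeg w" by (simp add: std_def)
  then obtain j where j: "0 < Poly_Mapping.lookup w j" using mdeg_pos by blast
  have w: "w = var_exp j + (w - var_exp j)" using e_decomp[OF j] .
  have "j \<in> Poly_Mapping.keys w" using j by (simp add: in_keys_iff)
  then have jn: "j < n" using a(2) by (auto simp: std_def)
  let ?w = "w - var_exp j"
  have "?w \<in> std n I (Suc d)"
  proof -
    have "mdeg ?w = Suc d" using w a(2) mdeg_add[of "var_exp j" ?w] mdeg_var by (simp add: std_def)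
    moreover have "Poly_Mapping.keys ?w \<subseteq> {..<n}" using a(2) keys_minus_nat by (fastforce simp: std_def)
    moreover have "mon 1 ?w \<notin> I"
    proof
      assume "mon 1 ?w \<in> I"
      then have "mon 1 (?w + var_exp j) \<in> I" by (rule mon_mult_I[OF idl]) (use jn in \<open>simp add: keys_var\<close>)
      then show False using a(2) w by (simp add: std_def add.commute)
    qed
    ultimately show ?thesis by (simp add: std_def)
  qed
  then have "0 < Poly_Mapping.lookup ?w (n-1)" using a(1) by blast
  then show False using a(3) by (simp add: lookup_minus)
qed

lemma surj_mono: "d \<le> d' \<Longrightarrow> SurjP n I d \<Longrightarrow> SurjP n I d'"
  by (induction d' rule: dec_induct) (auto intro: surj_step)

lemma surj_art: "artinian_quot n I \<Longrightarrow> \<exists>D. SurjP n I D"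
proof -
  assume "artinian_quot n I"
  then obtain D where D: "\<forall>d\<ge>D. homog n d \<subseteq> I" by (auto simp: artinian_quot_def)
  have "std n I (Suc D) = {}"
  proof (rule ccontr)
    assume "std n I (Suc D) \<noteq> {}"
    then obtain w where w: "w \<in> std n I (Suc D)" by blast
    then have "mon 1 w \<in> homog n (Suc D)"
      using keys_mon_sub[of 1 w] by (auto simp: std_def homog_def intro!: mon_polyR)
    then show False using D[rule_format, of "Suc D"] w by (auto simp: std_def)
  qed
  then show ?thesis by (auto simp: SurjP_def)
qed

lemma inj_surj_0: "InjP n I 0 \<or> SurjP n I 0"
proof (rule disjCI)
  assume "\<not> SurjP n I 0"
  then obtain w where w: "w \<in> std n I 1" "Poly_Mapping.lookup w (n-1) = 0" by (auto simp: SurjP_def)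
  then obtain i where i: "w = var_exp i" using mdeg_one by (auto simp: std_def)
  have "i < n" using w i by (auto simp: std_def keys_var)
  moreover have "i \<noteq> n - 1" using w i by (auto simp: var_exp_def)
  ultimately have ilt: "i < n - 1" by simp
  show "InjP n I 0"
  proof (unfold InjP_def, rule ballI, rule notI)
    fix u assume u: "u \<in> std n I 0" "mon 1 (var_exp (n - 1) + u) \<in> I"
    then have "u = 0" by (simp add: std_def mdeg_eq_0)
    then have "mon 1 (var_exp (n-1)) \<in> I" using u by simp
    then have "mon 1 (var_exp i + (var_exp (n-1) - var_exp (n-1))) \<in> I"
      by (rule ss_move) (use ilt in \<open>simp_all add: var_exp_def\<close>)
    then show False using w i by (simp add: std_def)
  qed
qed

lemma claimA:
  assumes l: "l \<in> homog n 1" and u: "Poly_Mapping.keys u \<subseteq> {..<n}" and eu: "mon 1 (var_exp (n-1) + u) \<in> I"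
  shows "l * mon 1 u \<in> I"
proof (rule keys_in_I[OF idl])
  show "l * mon 1 u \<in> polyR n" using l u by (auto simp: homog_def intro!: polyR_mult mon_polyR)
  show "\<forall>m\<in>Poly_Mapping.keys (l * mon 1 u). mon 1 m \<in> I"
  proof
    fix m assume "m \<in> Poly_Mapping.keys (l * mon 1 u)"
    then obtain a b where ab: "m = a + b" "a \<in> Poly_Mapping.keys l" "b \<in> Poly_Mapping.keys (mon (1::'a) u)"
      using keys_mult[of l "mon (1::'a) u"] by blast
    have b: "b = u" using ab(3) keys_mon_sub by blast
    obtain i where i: "a = var_exp i" using ab(2) l mdeg_one by (auto simp: homog_def)
    have "i < n" using ab(2) l i by (auto simp: homog_def polyR_def keys_var)
    show "mon 1 m \<in> I"
    proof (cases "i = n - 1")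
      case True then show ?thesis using eu ab b i by simp
    next
      case False
      then have "i < n - 1" using \<open>i < n\<close> by simp
      have "mon 1 (var_exp i + ((var_exp (n-1) + u) - var_exp (n-1))) \<in> I"
        by (rule ss_move[OF eu lookup_e \<open>i < n - 1\<close>])
      then show ?thesis using ab b i by (simp add: add_minus_cancel_pm)
    qed
  qed
qed

lemma claim_inj:
  assumes l: "l \<in> homog n 1" and inj: "\<forall>f\<in>homog n d. l * f \<in> I \<longrightarrow> f \<in> I"
  shows "InjP n I d"
proof (unfold InjP_def, rule ballI, rule notI)
  fix u assume u: "u \<in> std n I d" "mon 1 (var_exp (n - 1) + u) \<in> I"
  have "l * mon 1 u \<in> I" using claimA[OF l _ u(2)] u(1) by (simp add: std_def)
  moreover have "mon 1 u \<in> homog n d" using u(1) keys_mon_sub[of 1 u]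
    by (auto simp: std_def homog_def intro!: mon_polyR)
  ultimately have "mon 1 u \<in> I" using inj by blast
  then show False using u(1) by (simp add: std_def)
qed

lemma mg_exists: "mon 1 m \<in> I \<Longrightarrow> \<exists>M. min_mon_gen n I M \<and> (\<forall>i. Poly_Mapping.lookup M i \<le> Poly_Mapping.lookup m i)"
proof (induction "mdeg m" arbitrary: m rule: less_induct)
  case less
  show ?case
  proof (cases "min_mon_gen n I m")
    case True then show ?thesis by auto
  next
    case False
    then obtain m' where m': "mon 1 m' \<in> I" "\<forall>i. Poly_Mapping.lookup m' i \<le> Poly_Mapping.lookup m i" "m' \<noteq> m"
      using less.prems by (auto simp: min_mon_gen_def)
    then have "mdeg m' < mdeg m" using le_mdeg by blast
    then obtain M where "min_mon_gen n I M" "\<forall>i. Poly_Mapping.lookup M i \<le> Poly_Mapping.lookup m' i"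
      using less.hyps m'(1) by blast
    then show ?thesis using m'(2) by (meson le_trans)
  qed
qed

end


definition scl :: "'a::field \<Rightarrow> 'a mpoly \<Rightarrow> 'a mpoly" where
  "scl c f = mon c 0 * f"

lemma vs: "vector_space (scl :: 'a::field \<Rightarrow> 'a mpoly \<Rightarrow> 'a mpoly)"
proof
  fix a b :: 'a and x y :: "'a mpoly"
  show "scl a (x + y) = scl a x + scl a y" by (simp add: scl_def distrib_left)
  show "scl (a + b) x = scl a x + scl b x" by (simp add: scl_def mon_def single_add distrib_right)
  show "scl a (scl b x) = scl (a * b) x" by (simp add: scl_def mon_mult mult.assoc[symmetric])
  show "scl 1 x = x" by (simp add: scl_def mon_def)
qed

interpretation VS: vector_space "scl :: 'a::field \<Rightarrow> 'a mpoly \<Rightarrow> 'a mpoly" by (rule vs)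

lemma lookup_scl: "Poly_Mapping.lookup (scl c f) k = c * Poly_Mapping.lookup f k"
  by (simp add: scl_def lookup_scale)

lemma indep_fin:
  assumes fin: "finite s" and h: "\<And>c. (\<Sum>v\<in>s. scl (c v) v) = 0 \<Longrightarrow> \<forall>v\<in>s. c v = (0::'a::field)"
  shows "VS.independent s"
  unfolding VS.independent_explicit_module
proof (intro allI impI)
  fix t u v assume a: "finite t" "t \<subseteq> s" "(\<Sum>v\<in>t. scl (u v) v) = 0" "v \<in> t"
  define c where "c v = (if v \<in> t then u v else 0)" for v
  have "(\<Sum>v\<in>s. scl (c v) v) = (\<Sum>v\<in>t. scl (c v) v)"
    by (rule sum.mono_neutral_right[OF fin a(2)]) (auto simp: c_def scl_def mon_def)
  also have "\<dots> = (\<Sum>v\<in>t. scl (u v) v)" by (rule sum.cong) (auto simp: c_def)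
  finally have "\<forall>v\<in>s. c v = 0" using a(3) h by simp
  then have "c v = 0" using a(2,4) by blast
  then show "u v = 0" using a(4) by (simp add: c_def)
qed

lemma indep_mons: "finite A \<Longrightarrow> VS.independent ((\<lambda>m. mon (1::'a::field) m) ` A)"
proof -
  assume A: "finite A"
  show ?thesis
  proof (rule indep_fin)
  show "finite ((\<lambda>m. mon (1::'a) m) ` A)" using A by simp
  fix c assume sum0: "(\<Sum>v\<in>(\<lambda>m. mon (1::'a) m) ` A. scl (c v) v) = 0"
  show "\<forall>v\<in>(\<lambda>m. mon (1::'a) m) ` A. c v = 0"
  proof
  fix v assume v: "v \<in> (\<lambda>m. mon (1::'a) m) ` A"
  then obtain m where m: "m \<in> A" "v = mon 1 m" by blast
  have inj: "inj_on (\<lambda>m. mon (1::'a) m) A" by (auto simp: inj_on_def mon_eq_iff)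
  have "(\<Sum>v\<in>(\<lambda>m. mon (1::'a) m) ` A. scl (c v) v) = (\<Sum>m\<in>A. mon (c (mon 1 m)) m)"
    by (simp add: sum.reindex[OF inj] scl_def mon_mult)
  then have "Poly_Mapping.lookup (\<Sum>m\<in>A. mon (c (mon 1 m)) m) m = 0" using sum0 by simp
  then show "c v = 0" using m A by (simp add: lookup_sum_mon_id)
  qed
  qed
qed

definition pi :: "('a::field) mpoly set \<Rightarrow> 'a mpoly \<Rightarrow> 'a mpoly" where
  "pi I f = (\<Sum>m\<in>{m\<in>Poly_Mapping.keys f. mon 1 m \<notin> I}. mon (Poly_Mapping.lookup f m) m)"

lemma lookup_pi: "Poly_Mapping.lookup (pi I f) k = (if mon 1 k \<notin> I then Poly_Mapping.lookup f k else 0)"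
  by (auto simp: pi_def lookup_sum_mon_id in_keys_iff)

lemma pi_add: "pi I (f + g) = pi I f + pi I g"
  by (rule poly_mapping_eqI) (simp add: lookup_pi lookup_add)
lemma pi_diff: "pi I (f - g) = pi I f - pi I g"
  by (rule poly_mapping_eqI) (simp add: lookup_pi lookup_minus)
lemma pi_scl: "pi I (scl c f) = scl c (pi I f)"
  by (rule poly_mapping_eqI) (simp add: lookup_pi lookup_scl)
lemma pi_sum: "pi I (sum g A) = (\<Sum>a\<in>A. pi I (g a))"
  by (rule poly_mapping_eqI) (simp add: lookup_pi lookup_sum)
lemma pi_mon: "mon 1 m \<notin> I \<Longrightarrow> pi I (mon 1 m) = mon 1 m"
  by (rule poly_mapping_eqI) (simp add: lookup_pi lookup_mon)

lemma pi_expand: "pi I f = (\<Sum>m\<in>{m\<in>Poly_Mapping.keys f. mon 1 m \<notin> I}. scl (Poly_Mapping.lookup f m) (mon 1 m))"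
  by (simp add: pi_def scl_def mon_mult)

context
  fixes n :: nat and I :: "('a::field) mpoly set"
  assumes mI: "monomial_ideal n I"
begin

lemma idl2: "is_ideal n I" using mI by (simp add: monomial_ideal_def)

lemma pi_I: "f \<in> I \<Longrightarrow> pi I f = 0"
proof (intro poly_mapping_eqI)
  fix k assume f: "f \<in> I"
  show "Poly_Mapping.lookup (pi I f) k = Poly_Mapping.lookup 0 k"
  proof (cases "Poly_Mapping.lookup f k = 0")
    case False
    then have "mon 1 k \<in> I" using mI f by (auto simp: monomial_ideal_def in_keys_iff)
    then show ?thesis by (simp add: lookup_pi)
  qed (simp add: lookup_pi)
qed

lemma f_pi_I: "f \<in> polyR n \<Longrightarrow> f - pi I f \<in> I"
proof (rule keys_in_I[OF idl2])
  assume f: "f \<in> polyR n"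
  have k: "Poly_Mapping.keys (f - pi I f) \<subseteq> {k\<in>Poly_Mapping.keys f. mon 1 k \<in> I}"
    by (auto simp: in_keys_iff lookup_minus lookup_pi split: if_splits)
  have "pi I f \<in> polyR n" unfolding pi_def
  proof (rule polyR_sum)
    fix m assume "m \<in> {m \<in> Poly_Mapping.keys f. mon 1 m \<notin> I}"
    then show "mon (Poly_Mapping.lookup f m) m \<in> polyR n" using f by (intro mon_polyR) (auto simp: polyR_def)
  qed
  then show "f - pi I f \<in> polyR n" using f by (rule polyR_diff[rotated])
  show "\<forall>m\<in>Poly_Mapping.keys (f - pi I f). mon 1 m \<in> I" using k by auto
qed

lemma pi0_I: "f \<in> polyR n \<Longrightarrow> pi I f = 0 \<Longrightarrow> f \<in> I"
  using f_pi_I by fastforce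

lemma pi_span: "f \<in> homog n d \<Longrightarrow> pi I f \<in> VS.span ((\<lambda>m. mon 1 m) ` std n I d)"
  unfolding pi_expand
proof (rule VS.span_sum)
  fix m assume f: "f \<in> homog n d" and m: "m \<in> {m \<in> Poly_Mapping.keys f. mon 1 m \<notin> I}"
  then have "m \<in> std n I d" by (auto simp: homog_def polyR_def std_def)
  then show "scl (Poly_Mapping.lookup f m) (mon 1 m) \<in> VS.span ((\<lambda>m. mon 1 m) ` std n I d)"
    by (intro VS.span_scale VS.span_base) auto
qed

lemma hilb_card: "hilb n I d = card (std n I d)"
  unfolding hilb_def
proof (rule Greatest_equality)
  let ?S0 = "(\<lambda>m. mon (1::'a) m) ` std n I d"
  have inj: "inj_on (\<lambda>m. mon (1::'a) m) (std n I d)" by (auto simp: inj_on_def mon_eq_iff)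
  have "indep_mod I ?S0"
    unfolding indep_mod_def
  proof (intro allI impI ballI)
    fix c v assume s: "(\<Sum>f\<in>?S0. mon (c f) 0 * f) \<in> I" and v: "v \<in> ?S0"
    then obtain m where m: "m \<in> std n I d" "v = mon 1 m" by blast
    have eq: "(\<Sum>f\<in>?S0. mon (c f) 0 * f) = (\<Sum>m\<in>std n I d. mon (c (mon 1 m)) m)"
      by (simp add: sum.reindex[OF inj] mon_mult)
    show "c v = 0"
    proof (rule ccontr)
      assume "c v \<noteq> 0"
      then have "m \<in> Poly_Mapping.keys (\<Sum>m\<in>std n I d. mon (c (mon 1 m)) m)"
        using m by (simp add: in_keys_iff lookup_sum_mon_id[OF std_fin])
      then have "mon 1 m \<in> I" using s eq mI by (auto simp: monomial_ideal_def)
      then show False using m by (simp add: std_def)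
    qed
  qed
  moreover have "?S0 \<subseteq> homog n d"
    using keys_mon_sub by (fastforce simp: std_def homog_def intro!: mon_polyR)
  ultimately show "\<exists>S. finite S \<and> S \<subseteq> homog n d \<and> card S = card (std n I d) \<and> indep_mod I S"
    using card_image[OF inj] finite_imageI[OF std_fin] by (intro exI[of _ ?S0]) auto
next
  fix y assume "\<exists>S. finite S \<and> S \<subseteq> homog n d \<and> card S = y \<and> indep_mod I S"
  then obtain S where S: "finite S" "S \<subseteq> homog n d" "card S = y" "indep_mod I S" by blast
  have SR: "h \<in> polyR n" if "h \<in> S" for h using S(2) that by (auto simp: homog_def)
  have key: "(\<Sum>f\<in>S. scl (c f) f) \<in> I" if "pi I (\<Sum>f\<in>S. scl (c f) f) = 0" for c
  proof -
    have "(\<Sum>f\<in>S. scl (c f) f) \<in> polyR n" unfolding scl_def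
    proof (rule polyR_sum)
      fix f assume "f \<in> S"
      show "mon (c f) 0 * f \<in> polyR n" by (rule polyR_mult[OF mon_polyR SR[OF \<open>f \<in> S\<close>]]) simp
    qed
    then show ?thesis using pi0_I that by blast
  qed
  have inj: "inj_on (pi I) S"
  proof (rule inj_onI, rule ccontr)
    fix f g assume fg: "f \<in> S" "g \<in> S" "pi I f = pi I g" "f \<noteq> g"
    define c where "c h = (if h = f then 1 else if h = g then -1 else (0::'a))" for h
    have "(\<Sum>h\<in>S. scl (c h) h) = (\<Sum>h\<in>S. (if h = f then f else 0) + (if h = g then - g else 0))"
      using fg(4) by (intro sum.cong) (auto simp: c_def scl_def mon_def single_uminus)
    also have "\<dots> = f - g" using fg S(1) by (simp add: sum.distrib)
    finally have eq: "(\<Sum>h\<in>S. scl (c h) h) = f - g" .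
    have "pi I (\<Sum>h\<in>S. scl (c h) h) = 0" unfolding eq using fg(3) by (simp add: pi_diff)
    then have "(\<Sum>h\<in>S. scl (c h) h) \<in> I" by (rule key)
    then have "c f = 0" using S(4) fg(1) by (simp add: indep_mod_def scl_def)
    then show False by (simp add: c_def)
  qed
  have "VS.independent (pi I ` S)"
  proof (rule indep_fin, goal_cases)
    show "finite (pi I ` S)" using S(1) by simp
  next
    case (2 c)
    note s0 = 2
    show ?case
    proof
    fix v assume v: "v \<in> pi I ` S"
    have "pi I (\<Sum>h\<in>S. scl (c (pi I h)) h) = (\<Sum>v\<in>pi I ` S. scl (c v) v)"
      by (simp add: pi_sum pi_scl sum.reindex[OF inj])
    then have "pi I (\<Sum>h\<in>S. scl (c (pi I h)) h) = 0" using s0 by simp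
    then have "(\<Sum>h\<in>S. scl (c (pi I h)) h) \<in> I" by (rule key)
    then have in1: "(\<Sum>h\<in>S. mon (c (pi I h)) 0 * h) \<in> I" by (simp add: scl_def)
    have "(\<Sum>h\<in>S. mon (c (pi I h)) 0 * h) \<in> I \<longrightarrow> (\<forall>h\<in>S. c (pi I h) = 0)"
      using S(4) unfolding indep_mod_def by (rule spec)
    then have "\<forall>h\<in>S. c (pi I h) = 0" using in1 by blast
    then show "c v = 0" using v by blast
    qed
  qed
  moreover have "pi I ` S \<subseteq> VS.span ((\<lambda>m. mon 1 m) ` std n I d)"
  proof
    fix x assume "x \<in> pi I ` S"
    then obtain f where "f \<in> S" "x = pi I f" by blast
    then show "x \<in> VS.span ((\<lambda>m. mon 1 m) ` std n I d)" using pi_span S(2) by blast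
  qed
  ultimately have "card (pi I ` S) \<le> card ((\<lambda>m. mon (1::'a) m) ` std n I d)"
    using VS.independent_span_bound[OF finite_imageI[OF std_fin]] by blast
  also have "\<dots> \<le> card (std n I d)" by (rule card_image_le[OF std_fin])
  finally show "y \<le> card (std n I d)" using card_image[OF inj] S(3) by simp
qed

end


context
  fixes n :: nat and I :: "('a::field) mpoly set"
  assumes n1: "1 \<le> n" and ss: "strongly_stable n I"
begin

lemma mI': "monomial_ideal n I" using ss by (simp add: strongly_stable_def)
lemma idl': "is_ideal n I" using mI' by (simp add: monomial_ideal_def)

lemma claim_surj:
  assumes l: "l \<in> homog n 1" and sj: "\<forall>g\<in>homog n (Suc d). \<exists>f\<in>homog n d. g - l * f \<in> I"
  shows "SurjP n I d"
proof (rule ccontr)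
  assume "\<not> SurjP n I d"
  then obtain w where w: "w \<in> std n I (Suc d)" "Poly_Mapping.lookup w (n-1) = 0"
    by (auto simp: SurjP_def)
  define V where "V = {v\<in>std n I d. mon 1 (var_exp (n-1) + v) \<notin> I}"
  define B where "B = (\<lambda>v. pi I (l * mon 1 v)) ` V"
  have finV: "finite V" unfolding V_def using std_fin by (rule finite_subset[rotated]) auto
  have lR: "l \<in> polyR n" using l by (simp add: homog_def)
  have span: "(\<lambda>m. mon (1::'a) m) ` std n I (Suc d) \<subseteq> VS.span B"
  proof
    fix t assume "t \<in> (\<lambda>m. mon (1::'a) m) ` std n I (Suc d)"
    then obtain m where m: "m \<in> std n I (Suc d)" "t = mon 1 m" by blast
    have "t \<in> homog n (Suc d)" using m keys_mon_sub[of 1 m]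
      by (auto simp: std_def homog_def intro!: mon_polyR)
    then obtain f where f: "f \<in> homog n d" "t - l * f \<in> I" using sj by blast
    have fR: "f \<in> polyR n" using f by (simp add: homog_def)
    have "pi I (t - l * f) = 0" using pi_I[OF mI' f(2)] .
    moreover have "pi I t = t" using m by (simp add: pi_mon std_def)
    ultimately have t1: "t = pi I (l * f)" by (simp add: pi_diff)
    have "l * f - l * pi I f = l * (f - pi I f)" by (simp add: right_diff_distrib)
    also have "\<dots> \<in> I" by (rule I_mult[OF idl' lR f_pi_I[OF mI' fR]])
    finally have "pi I (l * f - l * pi I f) = 0" by (rule pi_I[OF mI'])
    then have t2: "t = pi I (l * pi I f)" using t1 by (simp add: pi_diff)
    let ?K = "{m\<in>Poly_Mapping.keys f. mon 1 m \<notin> I}"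
    have "l * pi I f = (\<Sum>m\<in>?K. scl (Poly_Mapping.lookup f m) (l * mon 1 m))"
      unfolding pi_expand by (simp add: sum_distrib_left scl_def mult.left_commute)
    then have t3: "t = (\<Sum>m\<in>?K. scl (Poly_Mapping.lookup f m) (pi I (l * mon 1 m)))"
      using t2 by (simp add: pi_sum pi_scl)
    show "t \<in> VS.span B" unfolding t3
    proof (rule VS.span_sum)
      fix m assume mK: "m \<in> ?K"
      then have ms: "m \<in> std n I d" using f by (auto simp: homog_def polyR_def std_def)
      show "scl (Poly_Mapping.lookup f m) (pi I (l * mon 1 m)) \<in> VS.span B"
      proof (cases "m \<in> V")
        case True
        then show ?thesis unfolding B_def by (intro VS.span_scale VS.span_base) auto
      next
        case False
        then have "mon 1 (var_exp (n-1) + m) \<in> I" using ms by (simp add: V_def)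
        then have "l * mon 1 m \<in> I" using claimA[OF n1 ss l] ms by (simp add: std_def)
        then have "pi I (l * mon 1 m) = 0" by (rule pi_I[OF mI'])
        then show ?thesis by (simp add: scl_def VS.span_zero)
      qed
    qed
  qed
  have "card ((\<lambda>m. mon (1::'a) m) ` std n I (Suc d)) \<le> card B"
    using VS.independent_span_bound[OF _ indep_mons[OF std_fin] span] finV B_def by blast
  also have "\<dots> \<le> card V" unfolding B_def by (rule card_image_le[OF finV])
  finally have c1: "card (std n I (Suc d)) \<le> card V"
    by (simp add: card_image inj_on_def mon_eq_iff)
  have inj: "inj_on ((+) (var_exp (n-1))) V" by (auto simp: inj_on_def)
  have sub: "(+) (var_exp (n-1)) ` V \<subseteq> std n I (Suc d) - {w}"
  proof
    fix x assume "x \<in> (+) (var_exp (n-1)) ` V"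
    then obtain v where v: "v \<in> V" "x = var_exp (n-1) + v" by blast
    have "x \<noteq> w" using w(2) v(2) lookup_e[OF n1 ss, of "n-1" v] by auto
    moreover have "x \<in> std n I (Suc d)" using v e_keys[OF n1 ss] 
      by (auto simp: V_def std_def keys_add_nat mdeg_add mdeg_var)
    ultimately show "x \<in> std n I (Suc d) - {w}" by blast
  qed
  have "card V \<le> card (std n I (Suc d) - {w})"
    using card_inj_on_le[OF inj sub] std_fin by blast
  also have "\<dots> < card (std n I (Suc d))" using w(1) std_fin
    by (meson card_Diff1_less)
  finally show False using c1 by simp
qed

end


context
  fixes n :: nat and I :: "('a::field) mpoly set"
  assumes n1: "1 \<le> n" and ss: "strongly_stable n I"
begin

lemma mI'': "monomial_ideal n I" using ss by (simp add: strongly_stable_def)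
lemma idl'': "is_ideal n I" using mI'' by (simp add: monomial_ideal_def)

lemma dir1:
  assumes art: "artinian_quot n I" and wlp: "WLP n I"
  shows "\<exists>k. (\<forall>i<k. hilb n I i < hilb n I (i+1)) \<and> (\<forall>i\<ge>k. hilb n I i \<ge> hilb n I (i+1))
       \<and> ideal_pow n (ideal_gen n {mon 1 (var_exp i) | i. i < n - 1}) (k+1) \<subseteq> I
       \<and> (\<forall>m. min_mon_gen n I m \<and> 0 < Poly_Mapping.lookup m (n - 1) \<longrightarrow> mdeg m \<ge> k + 1)"
proof -
  obtain l where l: "l \<in> homog n 1" and lw: "\<forall>d\<ge>1.
      (\<forall>f\<in>homog n d. l * f \<in> I \<longrightarrow> f \<in> I) \<or>
      (\<forall>g\<in>homog n (d+1). \<exists>f\<in>homog n d. g - l * f \<in> I)" using wlp by (auto simp: WLP_def)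
  have IS: "InjP n I d \<or> SurjP n I d" for d
  proof (cases "d = 0")
    case True then show ?thesis using inj_surj_0[OF n1 ss] by simp
  next
    case False
    then have "(\<forall>f\<in>homog n d. l * f \<in> I \<longrightarrow> f \<in> I) \<or>
      (\<forall>g\<in>homog n (Suc d). \<exists>f\<in>homog n d. g - l * f \<in> I)" using lw by simp
    then show ?thesis using claim_inj[OF n1 ss l] claim_surj[OF n1 ss l] by blast
  qed
  obtain D where D: "SurjP n I D" using surj_art[OF n1 ss art] by blast
  define k where "k = (LEAST d. SurjP n I d)"
  have Sk: "SurjP n I k" unfolding k_def by (rule LeastI[of "\<lambda>d. SurjP n I d", OF D])
  have nS: "\<not> SurjP n I i" if "i < k" for i using that not_less_Least unfolding k_def by blast
  have hc: "hilb n I i = card (std n I i)" for i by (rule hilb_card[OF mI''])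
  have A1: "\<forall>i<k. hilb n I i < hilb n I (i+1)"
  proof (intro allI impI)
    fix i assume "i < k"
    then have "\<not> SurjP n I i" "InjP n I i" using nS IS by auto
    then show "hilb n I i < hilb n I (i+1)" using inj_lt[OF n1 ss] hc by simp
  qed
  have A2: "\<forall>i\<ge>k. hilb n I i \<ge> hilb n I (i+1)"
  proof (intro allI impI)
    fix i assume "k \<le> i"
    then have "SurjP n I i" using surj_mono[OF n1 ss _ Sk] by blast
    then show "hilb n I i \<ge> hilb n I (i+1)" using surj_le[OF n1 ss] hc by simp
  qed
  have B: "ideal_pow n (ideal_gen n {mon 1 (var_exp i) | i. i < n - 1}) (k+1) \<subseteq> I"
  proof -
    have "(Pdiv n (k+1) :: 'a mpoly set) \<subseteq> I"
    proof
      fix f :: "'a mpoly" assume f: "f \<in> Pdiv n (k+1)"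
      show "f \<in> I"
      proof (rule keys_in_I[OF idl''])
        show "f \<in> polyR n" using f by (simp add: Pdiv_def)
        show "\<forall>m\<in>Poly_Mapping.keys f. mon 1 m \<in> I"
        proof
          fix m assume mk: "m \<in> Poly_Mapping.keys f"
          then obtain w r where wr: "w \<in> Wm n (k+1)" "m = w + r" using f mk unfolding Pdiv_def by blast
          have wp: "mdeg w = k+1" "Poly_Mapping.keys w \<subseteq> {..<n-1}" using W_props[OF wr(1)] by auto
          have mn: "Poly_Mapping.keys m \<subseteq> {..<n}" using f mk by (auto simp: Pdiv_def polyR_def)
          have "mon 1 w \<in> I"
          proof (rule ccontr)
            assume "mon 1 w \<notin> I"
            then have "w \<in> std n I (Suc k)" using wp n1 by (auto simp: std_def)
            then have "0 < Poly_Mapping.lookup w (n-1)" using Sk by (auto simp: SurjP_def)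
            then have "n - 1 \<in> Poly_Mapping.keys w" by (simp add: in_keys_iff)
            then show False using wp(2) by auto
          qed
          moreover have "Poly_Mapping.keys r \<subseteq> {..<n}" using mn wr(2) by (auto simp: keys_add_nat)
          ultimately show "mon 1 m \<in> I" unfolding wr(2) by (rule mon_mult_I[OF idl''])
        qed
      qed
    qed
    then show ?thesis using pow_Pdiv[of n "k+1"] by blast
  qed
  have C: "\<forall>m. min_mon_gen n I m \<and> 0 < Poly_Mapping.lookup m (n - 1) \<longrightarrow> mdeg m \<ge> k + 1"
  proof (intro allI impI, rule ccontr)
    fix M assume a: "min_mon_gen n I M \<and> 0 < Poly_Mapping.lookup M (n - 1)" "\<not> k + 1 \<le> mdeg M"
    define u where "u = M - var_exp (n-1)"
    have Mu: "M = var_exp (n-1) + u" unfolding u_def using a(1) e_decomp[OF n1 ss] by blast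
    have MI: "mon 1 M \<in> I" using a(1) by (simp add: min_mon_gen_def)
    have du: "mdeg u < k" using a(2) Mu mdeg_add[of "var_exp (n-1)" u] mdeg_var by simp
    have ku: "Poly_Mapping.keys u \<subseteq> {..<n}"
      using keys_mon_I[OF idl'' MI] keys_minus_nat[of M "var_exp (n-1)"] unfolding u_def by blast
    have "mon 1 u \<notin> I"
    proof
      assume "mon 1 u \<in> I"
      moreover have "\<forall>i. Poly_Mapping.lookup u i \<le> Poly_Mapping.lookup M i"
        by (simp add: u_def lookup_minus)
      ultimately have "u = M" using a(1) by (auto simp: min_mon_gen_def)
      then show False using Mu lookup_e[OF n1 ss, of "n-1" u] a(1)
        by (metis add_cancel_right_left lookup_zero less_irrefl var_exp_def
             lookup_single_eq zero_neq_one add.right_neutral)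
    qed
    then have "u \<in> std n I (mdeg u)" using ku by (simp add: std_def)
    moreover have "InjP n I (mdeg u)" using IS nS du by blast
    ultimately have "mon 1 (var_exp (n-1) + u) \<notin> I" by (simp add: InjP_def)
    then show False using MI Mu by simp
  qed
  show ?thesis using A1 A2 B C by blast
qed

end


context
  fixes n :: nat and I :: "('a::field) mpoly set"
  assumes n1: "1 \<le> n" and ss: "strongly_stable n I"
begin

lemma mI3: "monomial_ideal n I" using ss by (simp add: strongly_stable_def)
lemma idl3: "is_ideal n I" using mI3 by (simp add: monomial_ideal_def)

lemma aux_sub: "(g::'b::ab_group_add) = X + Y \<Longrightarrow> g - X = Y" by simp

lemma dir2:
  assumes B: "ideal_pow n (ideal_gen n {mon 1 (var_exp i) | i. i < n - 1}) (k+1) \<subseteq> I"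
    and C: "\<forall>m. min_mon_gen n I m \<and> 0 < Poly_Mapping.lookup m (n - 1) \<longrightarrow> mdeg m \<ge> k + 1"
  shows "WLP n I"
proof -
  let ?e = "var_exp (n-1)"
  let ?l = "mon (1::'a) ?e"
  have eR: "Poly_Mapping.keys ?e \<subseteq> {..<n}" by (rule e_keys[OF n1 ss])
  have l: "?l \<in> homog n 1"
    using keys_mon_sub[of "1::'a" ?e] mon_polyR[OF eR, of "1::'a"] by (auto simp: homog_def mdeg_var)
  have low: "mon 1 m \<in> I" if km: "Poly_Mapping.keys m \<subseteq> {..<n-1}" and dm: "k + 1 \<le> mdeg m" for m
  proof -
    obtain w r where wr: "w \<in> Wm n (k+1)" "m = w + r" using W_exists[OF km dm] by blast
    have "mon (1::'a) w \<in> I" by (rule subsetD[OF B W_in_pow[OF wr(1)]])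
    moreover have "Poly_Mapping.keys r \<subseteq> {..<n}" using km wr(2) by (auto simp: keys_add_nat)
    ultimately show ?thesis unfolding wr(2) by (rule mon_mult_I[OF idl3])
  qed
  have "\<forall>d\<ge>1. (\<forall>f\<in>homog n d. ?l * f \<in> I \<longrightarrow> f \<in> I) \<or>
      (\<forall>g\<in>homog n (d+1). \<exists>f\<in>homog n d. g - ?l * f \<in> I)"
  proof (intro allI impI)
    fix d :: nat assume "1 \<le> d"
    show "(\<forall>f\<in>homog n d. ?l * f \<in> I \<longrightarrow> f \<in> I) \<or>
      (\<forall>g\<in>homog n (d+1). \<exists>f\<in>homog n d. g - ?l * f \<in> I)"
    proof (cases "d < k")
      case True
      have "\<forall>f\<in>homog n d. ?l * f \<in> I \<longrightarrow> f \<in> I"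
      proof (intro ballI impI)
        fix f assume f: "f \<in> homog n d" "?l * f \<in> I"
        show "f \<in> I"
        proof (rule keys_in_I[OF idl3])
          show "f \<in> polyR n" using f by (simp add: homog_def)
          show "\<forall>m\<in>Poly_Mapping.keys f. mon 1 m \<in> I"
          proof (rule ballI, rule ccontr)
            fix m assume mk: "m \<in> Poly_Mapping.keys f" and nI: "mon 1 m \<notin> I"
            have mn: "Poly_Mapping.keys m \<subseteq> {..<n}" "mdeg m = d" using f mk by (auto simp: homog_def polyR_def)
            have "Poly_Mapping.lookup (?l * f) (?e + m) = Poly_Mapping.lookup f m" by (rule lookup_shift)
            then have "?e + m \<in> Poly_Mapping.keys (?l * f)" using mk by (simp add: in_keys_iff)
            then have emI: "mon 1 (?e + m) \<in> I" by (rule mon_key[OF n1 ss f(2)])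
            obtain M where M: "min_mon_gen n I M" "\<forall>i. Poly_Mapping.lookup M i \<le> Poly_Mapping.lookup (?e + m) i"
              using mg_exists[OF n1 ss emI] by blast
            have MI: "mon 1 M \<in> I" using M(1) by (simp add: min_mon_gen_def)
            show False
            proof (cases "\<forall>i. Poly_Mapping.lookup M i \<le> Poly_Mapping.lookup m i")
              case True
              have "m = M + (m - M)" by (rule le_decomp[OF True])
              moreover have "Poly_Mapping.keys (m - M) \<subseteq> {..<n}" using mn keys_minus_nat by blast
              ultimately have "mon 1 m \<in> I" using mon_mult_I[OF idl3 MI] by metis
              then show False using nI by simp
            next
              case False
              then obtain i where i: "Poly_Mapping.lookup m i < Poly_Mapping.lookup M i" by (auto simp: not_le)
              have "Poly_Mapping.lookup M i \<le> Poly_Mapping.lookup ?e i + Poly_Mapping.lookup m i"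
                using M(2) by (simp add: lookup_add)
              then have "i = n - 1" "0 < Poly_Mapping.lookup M (n-1)" using i
                by (auto simp: var_exp_def lookup_single when_def split: if_splits)
              then have "mdeg M \<ge> k + 1" using C M(1) by blast
              moreover have "mdeg M \<le> mdeg (?e + m)" by (rule le_mdeg(1)[OF M(2)])
              ultimately show False using mn True by (simp add: mdeg_add mdeg_var)
            qed
          qed
        qed
      qed
      then show ?thesis by blast
    next
      case False
      have "\<forall>g\<in>homog n (d+1). \<exists>f\<in>homog n d. g - ?l * f \<in> I"
      proof
        fix g :: "'a mpoly" assume g: "g \<in> homog n (d+1)"
        define A where "A = {m\<in>Poly_Mapping.keys g. 0 < Poly_Mapping.lookup m (n-1)}"
        define Bs where "Bs = {m\<in>Poly_Mapping.keys g. \<not> 0 < Poly_Mapping.lookup m (n-1)}"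
        define f where "f = (\<Sum>m\<in>A. mon (Poly_Mapping.lookup g m) (m - ?e))"
        have finA: "finite A" "finite Bs" by (auto simp: A_def Bs_def)
        have gk: "Poly_Mapping.keys m \<subseteq> {..<n}" "mdeg m = d + 1" if "m \<in> Poly_Mapping.keys g" for m
          using g that by (auto simp: homog_def polyR_def)
        have dec: "m = ?e + (m - ?e)" if "m \<in> A" for m using that e_decomp[OF n1 ss] by (auto simp: A_def)
        have "?l * f = (\<Sum>m\<in>A. mon (Poly_Mapping.lookup g m) (?e + (m - ?e)))"
          unfolding f_def by (simp add: sum_distrib_left mon_mult)
        also have "\<dots> = (\<Sum>m\<in>A. mon (Poly_Mapping.lookup g m) m)"
        proof (rule sum.cong)
          fix x assume x: "x \<in> A"
          have "?e + (x - ?e) = x" by (rule sym[OF dec[OF x]])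
          then show "mon (Poly_Mapping.lookup g x) (?e + (x - ?e)) = mon (Poly_Mapping.lookup g x) x"
            by (simp only:)
        qed simp
        finally have lf: "?l * f = (\<Sum>m\<in>A. mon (Poly_Mapping.lookup g m) m)" .
        have "g = (\<Sum>m\<in>A \<union> Bs. mon (Poly_Mapping.lookup g m) m)"
          by (subst poly_expand[of g]) (rule sum.cong, auto simp: A_def Bs_def)
        also have "\<dots> = (\<Sum>m\<in>A. mon (Poly_Mapping.lookup g m) m) + (\<Sum>m\<in>Bs. mon (Poly_Mapping.lookup g m) m)"
          by (rule sum.union_disjoint) (auto simp: finA A_def Bs_def)
        finally have g2: "g = (\<Sum>m\<in>A. mon (Poly_Mapping.lookup g m) m) + (\<Sum>m\<in>Bs. mon (Poly_Mapping.lookup g m) m)" .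
        have "g - ?l * f = (\<Sum>m\<in>Bs. mon (Poly_Mapping.lookup g m) m)"
          by (rule aux_sub[OF g2[folded lf]])
        also have "\<dots> \<in> I"
        proof (rule I_sum[OF idl3])
          fix m assume m: "m \<in> Bs"
          have "Poly_Mapping.keys m \<subseteq> {..<n-1}"
          proof
            fix x assume x: "x \<in> Poly_Mapping.keys m"
            have mg: "m \<in> Poly_Mapping.keys g" "Poly_Mapping.lookup m (n-1) = 0" using m by (auto simp: Bs_def)
            have "x < n" using gk(1)[OF mg(1)] x by auto
            moreover have "x \<noteq> n - 1" using x mg(2) by (auto simp: in_keys_iff)
            ultimately show "x \<in> {..<n-1}" by auto
          qed
          moreover have "k + 1 \<le> mdeg m" using gk[of m] m False by (auto simp: Bs_def)
          ultimately have "mon 1 m \<in> I" by (rule low)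
          then have "mon (Poly_Mapping.lookup g m) 0 * mon 1 m \<in> I" by (rule I_scale[OF idl3])
          then show "mon (Poly_Mapping.lookup g m) m \<in> I" by (simp add: mon_mult)
        qed
        finally have gI: "g - ?l * f \<in> I" .
        have "f \<in> homog n d"
        proof -
          have "\<forall>m\<in>A. Poly_Mapping.keys (m - ?e) \<subseteq> {..<n} \<and> mdeg (m - ?e) = d"
          proof
            fix m assume m: "m \<in> A"
            then have "m \<in> Poly_Mapping.keys g" by (simp add: A_def)
            then show "Poly_Mapping.keys (m - ?e) \<subseteq> {..<n} \<and> mdeg (m - ?e) = d"
              using gk[of m] dec[OF m] keys_minus_nat[of m ?e] mdeg_add[of ?e "m - ?e"] mdeg_var
              by auto
          qed
          moreover have "Poly_Mapping.keys f \<subseteq> (\<Union>m\<in>A. Poly_Mapping.keys (mon (Poly_Mapping.lookup g m) (m - ?e)))"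
            unfolding f_def by (rule keys_sum)
          ultimately show ?thesis using keys_mon_sub by (fastforce simp: homog_def polyR_def)
        qed
        then show "\<exists>f\<in>homog n d. g - ?l * f \<in> I" using gI by blast
      qed
      then show ?thesis by blast
    qed
  qed
  then show ?thesis unfolding WLP_def by (rule bexI[OF _ l])
qed

end

theorem lemma3p4:
  fixes n :: nat and I :: "('a::field_char_0) mpoly set"
  assumes "1 \<le> n"
    and "strongly_stable n I"
    and "artinian_quot n I"
  shows "WLP n I \<longleftrightarrow>
    (\<exists>k. (\<forall>i<k. hilb n I i < hilb n I (i+1)) \<and> (\<forall>i\<ge>k. hilb n I i \<ge> hilb n I (i+1))
       \<and> ideal_pow n (ideal_gen n {mon 1 (var_exp i) | i. i < n - 1}) (k+1) \<subseteq> I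
       \<and> (\<forall>m. min_mon_gen n I m \<and> 0 < Poly_Mapping.lookup m (n - 1) \<longrightarrow> mdeg m \<ge> k + 1))"
  using dir1[OF assms(1,2,3)] dir2[OF assms(1,2)] by blast

end
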